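(* Let $\operatorname{P}\in\operatorname{MM}(A,\theta,S)$ and suppose $\theta_i$ is varied to $\tilde\theta_i\in(0,1)$, where $i\in S_j$. Then: (i) for a generic $\tilde\theta_i$-covariation scheme $\sigma$ with image parameter $\tilde\theta$, $$\mathcal{D}_{\operatorname{CD}}(\sigma(\operatorname{P}),\operatorname{P})=\log\max_{y\in\mathbb{Y}_{S_j}^{\neq}}\prod_{l\in S_j}\Big(\frac{\tilde\theta_l}{\theta_l}\Big)^{A_{y,l}}-\log\min_{y\in\mathbb{Y}_{S_j}^{\neq}}\prod_{l\in S_j}\Big(\frac{\tilde\theta_l}{\theta_l}\Big)^{A_{y,l}};$$ (ii) for proportional covariation, $$\mathcal{D}_{\operatorname{CD}}(\sigma_{\operatorname{pro}}(\operatorname{P}),\operatorname{P})=\log\max_{y\in\mathbb{Y}_{S_j}^{\neq}}\Big(\frac{\tilde\theta_i}{\theta_i}\Big)^{A_{y,i}}\Big(\frac{1-\tilde\theta_i}{1-\theta_i}\Big)^{|A_{y,S_j^{-i}}|}-\log\min_{y\in\mathbb{Y}_{S_j}^{\neq}}\Big(\frac{\tilde\theta_i}{\theta_i}\Big)^{A_{y,i}}\Big(\frac{1-\tilde\theta_i}{1-\theta_i}\Big)^{|A_{y,S_j^{-i}}|};$$ (iii) for uniform covariation, $$\mathcal{D}_{\operatorname{CD}}(\sigma_{\operatorname{uni}}(\operatorname{P}),\operatorname{P})=\log\max_{y\in\mathbb{Y}_{S_j}^{\neq}}\frac{\tilde\theta_i^{A_{y,i}}\big(\frac{1-\tilde\theta_i}{\#S_j-1}\big)^{|A_{y,S_j^{-i}}|}}{\prod_{l\in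 S_j}\theta_l^{A_{y,l}}}-\log\min_{y\in\mathbb{Y}_{S_j}^{\neq}}\frac{\tilde\theta_i^{A_{y,i}}\big(\frac{1-\tilde\theta_i}{\#S_j-1}\big)^{|A_{y,S_j^{-i}}|}}{\prod_{l\in S_j}\theta_l^{A_{y,l}}};$$ (iv) for linear covariation with coefficients $\gamma_k,\delta_k$, $$\mathcal{D}_{\operatorname{CD}}(\sigma_{\operatorname{lin}}(\operatorname{P}),\operatorname{P})=\log\max_{y\in\mathbb{Y}_{S_j}^{\neq}}\Big(\frac{\tilde\theta_i}{\theta_i}\Big)^{A_{y,i}}\prod_{k\in S_j^{-i}}\Big(\frac{\gamma_k\tilde\theta_i+\delta_k}{\theta_k}\Big)^{A_{y,k}}-\log\min_{y\in\mathbb{Y}_{S_j}^{\neq}}\Big(\frac{\tilde\theta_i}{\theta_i}\Big)^{A_{y,i}}\prod_{k\in S_j^{-i}}\Big(\frac{\gamma_k\tilde\theta_i+\delta_k}{\theta_k}\Big)^{A_{y,k}}.$$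
   Context: Let $\mathbb{Y}$ be a finite set with $q$ elements. A monomial model $\operatorname{MM}(A,\theta,S)$ is given by $A\in\mathcal{M}_{q\times k}(\mathbb{Z}_{\ge0})$ with rows $A_y$, $y\in\mathbb{Y}$, parameters $\theta\in\mathbb{R}^k_{>0}$, and a partition $S=\{S_1,\dots,S_n\}$ of $[k]$ with each block $(\theta_l)_{l\in S_m}$ in the open probability simplex; $\operatorname{P}(y)=\prod_l\theta_l^{A_{y,l}}$, which is a probability distribution on $\mathbb{Y}$ for every such parameter. Notation: $S_j^{-i}=S_j\setminus\{i\}$, $|A_{y,H}|=\sum_{l\in H}A_{y,l}$; for $\emptyset\ne H\subset[k]$, $\mathbb{Y}_H^{=}=\{y\in\mathbb{Y}: A_{y,l}=0\text{ for all }l\in H\}$ and $\mathbb{Y}_H^{\neq}=\mathbb{Y}\setminus\mathbb{Y}_H^{=}$. A $\tilde\theta_i$-covariation scheme $\sigma$ ($i\in S_j$) maps $\theta$ to $\tilde\theta$ with $\tilde\theta_i$ given, $\tilde\theta_l=\theta_l$ for $l\notin S_j$, and $(\tilde\theta_l)_{l\in S_j}$ in the open simplex; $\sigma(\operatorname{P})(y)=\tilde\theta^{A_y}$. Proportional: $\tilde\theta_k=\frac{1-\tilde\theta_i}{1-\theta_i}\theta_k$; uniform: $\tilde\theta_k=\frac{1-\tilde\theta_i}{\#S_j-1}$; linear: $\tilde\theta_k=\gamma_k\tilde\theta_i+\delta_k$, constants chosen so the block sums to one ($k\in S_j^{-i}$). The CD distance between distributions $\tilde{\operatorname{P}},\operatorname{P}$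 on $\mathbb{Y}$ is $\mathcal{D}_{\operatorname{CD}}(\tilde{\operatorname{P}},\operatorname{P})=\log\max_{y}\frac{\tilde{\operatorname{P}}(y)}{\operatorname{P}(y)}-\log\min_y\frac{\tilde{\operatorname{P}}(y)}{\operatorname{P}(y)}$. *)

theory Defs
  imports Complex_Main "HOL-Library.Disjoint_Sets"
begin

text \<open>Parameters: indices are [k] = {1..k}; \<theta> :: nat \<Rightarrow> real (values outside [k] irrelevant).\<close>

definition open_simplex :: "nat set \<Rightarrow> (nat \<Rightarrow> real) \<Rightarrow> bool" where
  "open_simplex B \<theta> \<longleftrightarrow> (\<forall>l\<in>B. 0 < \<theta> l) \<and> (\<Sum>l\<in>B. \<theta> l) = 1"

definition mm_param :: "nat \<Rightarrow> nat set set \<Rightarrow> (nat \<Rightarrow> real) \<Rightarrow> bool" where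
  "mm_param k S \<theta> \<longleftrightarrow> (\<forall>l\<in>{1..k}. 0 < \<theta> l) \<and> (\<forall>B\<in>S. open_simplex B \<theta>)"

definition mono_prob :: "('y \<Rightarrow> nat \<Rightarrow> nat) \<Rightarrow> nat \<Rightarrow> (nat \<Rightarrow> real) \<Rightarrow> 'y \<Rightarrow> real" where
  "mono_prob A k \<theta> y = (\<Prod>l\<in>{1..k}. \<theta> l ^ A y l)"

definition monomial_model :: "'y set \<Rightarrow> ('y \<Rightarrow> nat \<Rightarrow> nat) \<Rightarrow> nat \<Rightarrow> nat set set \<Rightarrow> bool" where
  "monomial_model Y A k S \<longleftrightarrow> finite Y \<and> partition_on {1..k} S \<and>
     (\<forall>\<theta>. mm_param k S \<theta> \<longrightarrow> (\<Sum>y\<in>Y. mono_prob A k \<theta> y) = 1)"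

definition Y_neq :: "'y set \<Rightarrow> ('y \<Rightarrow> nat \<Rightarrow> nat) \<Rightarrow> nat set \<Rightarrow> 'y set" where
  "Y_neq Y A H = {y \<in> Y. \<exists>l\<in>H. A y l \<noteq> 0}"

definition cov_image :: "nat \<Rightarrow> nat set \<Rightarrow> nat \<Rightarrow> (nat \<Rightarrow> real) \<Rightarrow> real \<Rightarrow> (nat \<Rightarrow> real) \<Rightarrow> bool" where
  "cov_image k Sj i \<theta> t \<theta>' \<longleftrightarrow> \<theta>' i = t \<and> (\<forall>l\<in>{1..k} - Sj. \<theta>' l = \<theta> l) \<and> open_simplex Sj \<theta>'"

definition prop_cov :: "nat set \<Rightarrow> nat \<Rightarrow> (nat \<Rightarrow> real) \<Rightarrow> real \<Rightarrow> nat \<Rightarrow> real" where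
  "prop_cov Sj i \<theta> t l = (if l = i then t else if l \<in> Sj then (1 - t) / (1 - \<theta> i) * \<theta> l else \<theta> l)"

definition uni_cov :: "nat set \<Rightarrow> nat \<Rightarrow> (nat \<Rightarrow> real) \<Rightarrow> real \<Rightarrow> nat \<Rightarrow> real" where
  "uni_cov Sj i \<theta> t l = (if l = i then t else if l \<in> Sj then (1 - t) / (real (card Sj) - 1) else \<theta> l)"

definition lin_cov :: "nat set \<Rightarrow> nat \<Rightarrow> (nat \<Rightarrow> real) \<Rightarrow> (nat \<Rightarrow> real) \<Rightarrow> (nat \<Rightarrow> real) \<Rightarrow> real \<Rightarrow> nat \<Rightarrow> real" where
  "lin_cov Sj i \<theta> \<gamma> \<delta> t l = (if l = i then t else if l \<in> Sj then \<gamma> l * t + \<delta> l else \<theta> l)"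

definition cd_dist :: "'y set \<Rightarrow> ('y \<Rightarrow> real) \<Rightarrow> ('y \<Rightarrow> real) \<Rightarrow> real" where
  "cd_dist Y P' P = ln (Max ((\<lambda>y. P' y / P y) ` Y)) - ln (Min ((\<lambda>y. P' y / P y) ` Y))"

end

theory Submission
  imports Defs
begin

lemma main_cd:
  fixes Y :: "'y set" and A :: "'y \<Rightarrow> nat \<Rightarrow> nat" and k :: nat
    and S :: "nat set set" and \<theta> \<theta>' :: "nat \<Rightarrow> real" and Sj :: "nat set" and i :: nat and t :: real
  assumes MM: "monomial_model Y A k S"
    and par: "mm_param k S \<theta>"
    and Sj: "Sj \<in> S"
    and nonempty: "Y_neq Y A Sj \<noteq> {}"
    and cov: "cov_image k Sj i \<theta> t \<theta>'"
  shows "cd_dist Y (mono_prob A k \<theta>') (mono_prob A k \<theta>) =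
        ln (Max ((\<lambda>y. \<Prod>l\<in>Sj. (\<theta>' l / \<theta> l) ^ A y l) ` Y_neq Y A Sj))
      - ln (Min ((\<lambda>y. \<Prod>l\<in>Sj. (\<theta>' l / \<theta> l) ^ A y l) ` Y_neq Y A Sj))"
proof -
  define f where "f = (\<lambda>y. \<Prod>l\<in>Sj. (\<theta>' l / \<theta> l) ^ A y l)"
  define N where "N = Y_neq Y A Sj"
  define P where "P = mono_prob A k \<theta>"
  define P' where "P' = mono_prob A k \<theta>'"
  have finY: "finite Y" and part: "partition_on {1..k} S"
    and sum1: "\<And>\<eta>. mm_param k S \<eta> \<Longrightarrow> (\<Sum>y\<in>Y. mono_prob A k \<eta> y) = 1"
    using MM unfolding monomial_model_def by auto
  have SjK: "Sj \<subseteq> {1..k}" using part Sj unfolding partition_on_def by auto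
  have finSj: "finite Sj" using SjK finite_subset by blast
  have thpos: "\<And>l. l \<in> {1..k} \<Longrightarrow> 0 < \<theta> l" using par unfolding mm_param_def by auto
  have th'out: "\<And>l. l \<in> {1..k} - Sj \<Longrightarrow> \<theta>' l = \<theta> l" using cov unfolding cov_image_def by auto
  have th'Sj: "open_simplex Sj \<theta>'" using cov unfolding cov_image_def by auto
  have th'pos: "\<And>l. l \<in> {1..k} \<Longrightarrow> 0 < \<theta>' l"
  proof -
    fix l assume l: "l \<in> {1..k}"
    show "0 < \<theta>' l"
    proof (cases "l \<in> Sj")
      case True then show ?thesis using th'Sj unfolding open_simplex_def by blast
    next
      case False then show ?thesis using l thpos th'out by simp
    qed
  qed
  have par': "mm_param k S \<theta>'"
    unfolding mm_param_def
  proof (intro conjI ballI)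
    fix l assume "l \<in> {1..k}" then show "0 < \<theta>' l" by (rule th'pos)
  next
    fix B assume B: "B \<in> S"
    show "open_simplex B \<theta>'"
    proof (cases "B = Sj")
      case True then show ?thesis using th'Sj by simp
    next
      case False
      have "B \<inter> Sj = {}" using part B Sj False unfolding partition_on_def
        by (meson disjointD)
      moreover have "B \<subseteq> {1..k}" using part B unfolding partition_on_def by auto
      ultimately have eqB: "\<And>l. l \<in> B \<Longrightarrow> \<theta>' l = \<theta> l" using th'out by blast
      have oB: "open_simplex B \<theta>" using par B unfolding mm_param_def by auto
      have "(\<Sum>l\<in>B. \<theta>' l) = (\<Sum>l\<in>B. \<theta> l)" using eqB by (rule sum.cong[OF refl])
      then show ?thesis using oB eqB unfolding open_simplex_def by simp
    qed
  qed
  have Ppos: "\<And>y. 0 < P y" unfolding P_def mono_prob_def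
    using thpos by (intro prod_pos) auto
  have ratio: "\<And>y. P' y / P y = f y"
  proof -
    fix y
    have "P' y / P y = (\<Prod>l\<in>{1..k}. (\<theta>' l / \<theta> l) ^ A y l)"
      unfolding P_def P'_def mono_prob_def by (simp add: prod_dividef power_divide)
    also have "\<dots> = (\<Prod>l\<in>Sj. (\<theta>' l / \<theta> l) ^ A y l)"
    proof (rule prod.mono_neutral_right)
      show "\<forall>l\<in>{1..k} - Sj. (\<theta>' l / \<theta> l) ^ A y l = 1"
        using th'out thpos by (metis Diff_iff div_self less_irrefl power_one)
    qed (use SjK in auto)
    finally show "P' y / P y = f y" unfolding f_def .
  qed
  have P'eq: "\<And>y. P' y = P y * f y" using ratio Ppos
    by (metis less_irrefl nonzero_eq_divide_eq mult.commute)
  have fE: "\<And>y. y \<in> Y \<Longrightarrow> y \<notin> N \<Longrightarrow> f y = 1" unfolding f_def N_def Y_neq_def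
    by (auto intro!: prod.neutral)
  have NY: "N \<subseteq> Y" unfolding N_def Y_neq_def by auto
  have finN: "finite N" using NY finY finite_subset by blast
  have Nne: "N \<noteq> {}" using nonempty N_def by simp
  have sumN: "(\<Sum>y\<in>N. P y * f y) = (\<Sum>y\<in>N. P y)"
  proof -
    have "(\<Sum>y\<in>Y. P' y) = (\<Sum>y\<in>Y. P y)"
      using sum1[OF par] sum1[OF par'] unfolding P_def P'_def by simp
    moreover have "(\<Sum>y\<in>Y. P' y) = (\<Sum>y\<in>N. P' y) + (\<Sum>y\<in>Y - N. P' y)"
      using NY finY by (metis sum.subset_diff add.commute)
    moreover have "(\<Sum>y\<in>Y. P y) = (\<Sum>y\<in>N. P y) + (\<Sum>y\<in>Y - N. P y)"
      using NY finY by (metis sum.subset_diff add.commute)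
    moreover have "(\<Sum>y\<in>Y - N. P' y) = (\<Sum>y\<in>Y - N. P y)"
      using P'eq fE by simp
    ultimately show ?thesis using P'eq by simp
  qed
  have maxge: "1 \<le> Max (f ` N)"
  proof (rule ccontr)
    assume "\<not> 1 \<le> Max (f ` N)"
    hence "\<forall>y\<in>N. f y < 1"
    proof (intro ballI)
      fix y assume "\<not> 1 \<le> Max (f ` N)" "y \<in> N"
      moreover have "f y \<le> Max (f ` N)" using finN \<open>y \<in> N\<close> by (intro Max_ge) auto
      ultimately show "f y < 1" by linarith
    qed
    hence "\<forall>y\<in>N. P y * f y < P y * 1" using Ppos by simp
    hence "(\<Sum>y\<in>N. P y * f y) < (\<Sum>y\<in>N. P y * 1)"
      using finN Nne by (intro sum_strict_mono) auto
    thus False using sumN by simp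
  qed
  have minle: "Min (f ` N) \<le> 1"
  proof (rule ccontr)
    assume "\<not> Min (f ` N) \<le> 1"
    hence "\<forall>y\<in>N. 1 < f y"
    proof (intro ballI)
      fix y assume "\<not> Min (f ` N) \<le> 1" "y \<in> N"
      moreover have "Min (f ` N) \<le> f y" using finN \<open>y \<in> N\<close> by (intro Min_le) auto
      ultimately show "1 < f y" by linarith
    qed
    hence "\<forall>y\<in>N. P y * 1 < P y * f y" using Ppos by simp
    hence "(\<Sum>y\<in>N. P y * 1) < (\<Sum>y\<in>N. P y * f y)"
      using finN Nne by (intro sum_strict_mono) auto
    thus False using sumN by simp
  qed
  have img: "(\<lambda>y. P' y / P y) ` Y = f ` Y" using ratio by simp
  have "Max (f ` Y) = Max (f ` N)"
  proof (rule Max_eqI)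
    show "finite (f ` Y)" using finY by simp
    have "Max (f ` N) \<in> f ` N" using finN Nne by (intro Max_in) auto
    then show "Max (f ` N) \<in> f ` Y" using NY by blast
    fix x assume "x \<in> f ` Y"
    then obtain y where y: "y \<in> Y" "x = f y" by auto
    show "x \<le> Max (f ` N)"
    proof (cases "y \<in> N")
      case True thus ?thesis using y finN by simp
    next
      case False thus ?thesis using y fE maxge by simp
    qed
  qed
  moreover have "Min (f ` Y) = Min (f ` N)"
  proof (rule Min_eqI)
    show "finite (f ` Y)" using finY by simp
    have "Min (f ` N) \<in> f ` N" using finN Nne by (intro Min_in) auto
    then show "Min (f ` N) \<in> f ` Y" using NY by blast
    fix x assume "x \<in> f ` Y"
    then obtain y where y: "y \<in> Y" "x = f y" by auto
    show "Min (f ` N) \<le> x"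
    proof (cases "y \<in> N")
      case True thus ?thesis using y finN by simp
    next
      case False thus ?thesis using y fE minle by simp
    qed
  qed
  ultimately show ?thesis unfolding cd_dist_def
    using img by (simp add: f_def N_def P_def P'_def)
qed

theorem theorem2:
  fixes Y :: "'y set" and A :: "'y \<Rightarrow> nat \<Rightarrow> nat" and k :: nat
    and S :: "nat set set" and \<theta> :: "nat \<Rightarrow> real" and Sj :: "nat set" and i :: nat and t :: real
  assumes MM: "monomial_model Y A k S"
    and par: "mm_param k S \<theta>"
    and Sj: "Sj \<in> S" and i: "i \<in> Sj"
    and t: "0 < t" "t < 1"
    and nonempty: "Y_neq Y A Sj \<noteq> {}"
  shows
   "(\<forall>\<theta>'. cov_image k Sj i \<theta> t \<theta>' \<longrightarrow>
      cd_dist Y (mono_prob A k \<theta>') (mono_prob A k \<theta>) =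
        ln (Max ((\<lambda>y. \<Prod>l\<in>Sj. (\<theta>' l / \<theta> l) ^ A y l) ` Y_neq Y A Sj))
      - ln (Min ((\<lambda>y. \<Prod>l\<in>Sj. (\<theta>' l / \<theta> l) ^ A y l) ` Y_neq Y A Sj)))
  \<and> (cov_image k Sj i \<theta> t (prop_cov Sj i \<theta> t) \<longrightarrow>
      cd_dist Y (mono_prob A k (prop_cov Sj i \<theta> t)) (mono_prob A k \<theta>) =
        ln (Max ((\<lambda>y. (t / \<theta> i) ^ A y i * ((1 - t) / (1 - \<theta> i)) ^ (\<Sum>l\<in>Sj - {i}. A y l)) ` Y_neq Y A Sj))
      - ln (Min ((\<lambda>y. (t / \<theta> i) ^ A y i * ((1 - t) / (1 - \<theta> i)) ^ (\<Sum>l\<in>Sj - {i}. A y l)) ` Y_neq Y A Sj)))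
  \<and> (cov_image k Sj i \<theta> t (uni_cov Sj i \<theta> t) \<longrightarrow>
      cd_dist Y (mono_prob A k (uni_cov Sj i \<theta> t)) (mono_prob A k \<theta>) =
        ln (Max ((\<lambda>y. t ^ A y i * ((1 - t) / (real (card Sj) - 1)) ^ (\<Sum>l\<in>Sj - {i}. A y l)
                       / (\<Prod>l\<in>Sj. \<theta> l ^ A y l)) ` Y_neq Y A Sj))
      - ln (Min ((\<lambda>y. t ^ A y i * ((1 - t) / (real (card Sj) - 1)) ^ (\<Sum>l\<in>Sj - {i}. A y l)
                       / (\<Prod>l\<in>Sj. \<theta> l ^ A y l)) ` Y_neq Y A Sj)))
  \<and> (\<forall>\<gamma> \<delta>. cov_image k Sj i \<theta> t (lin_cov Sj i \<theta> \<gamma> \<delta> t) \<longrightarrow>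
      cd_dist Y (mono_prob A k (lin_cov Sj i \<theta> \<gamma> \<delta> t)) (mono_prob A k \<theta>) =
        ln (Max ((\<lambda>y. (t / \<theta> i) ^ A y i * (\<Prod>m\<in>Sj - {i}. ((\<gamma> m * t + \<delta> m) / \<theta> m) ^ A y m)) ` Y_neq Y A Sj))
      - ln (Min ((\<lambda>y. (t / \<theta> i) ^ A y i * (\<Prod>m\<in>Sj - {i}. ((\<gamma> m * t + \<delta> m) / \<theta> m) ^ A y m)) ` Y_neq Y A Sj)))"
proof -
  have part: "partition_on {1..k} S" using MM unfolding monomial_model_def by auto
  have SjK: "Sj \<subseteq> {1..k}" using part Sj unfolding partition_on_def by auto
  have finSj: "finite Sj" using SjK finite_subset by blast
  have thpos: "\<And>l. l \<in> Sj \<Longrightarrow> 0 < \<theta> l" using par SjK unfolding mm_param_def by auto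
  have split: "\<And>g y. (\<Prod>l\<in>Sj. g l ^ A y l) = g i ^ A y i * (\<Prod>l\<in>Sj - {i}. g l ^ A y l)"
    using finSj i by (simp add: prod.remove)
  note M = main_cd[OF MM par Sj nonempty]
  show ?thesis
  proof (intro conjI allI impI)
    fix \<theta>' assume c: "cov_image k Sj i \<theta> t \<theta>'"
    show "cd_dist Y (mono_prob A k \<theta>') (mono_prob A k \<theta>) =
        ln (Max ((\<lambda>y. \<Prod>l\<in>Sj. (\<theta>' l / \<theta> l) ^ A y l) ` Y_neq Y A Sj))
      - ln (Min ((\<lambda>y. \<Prod>l\<in>Sj. (\<theta>' l / \<theta> l) ^ A y l) ` Y_neq Y A Sj))"
      by (rule M[OF c])
  next
    assume c: "cov_image k Sj i \<theta> t (prop_cov Sj i \<theta> t)"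
    have eq: "(\<Prod>l\<in>Sj. (prop_cov Sj i \<theta> t l / \<theta> l) ^ A y l)
       = (t / \<theta> i) ^ A y i * ((1 - t) / (1 - \<theta> i)) ^ (\<Sum>l\<in>Sj - {i}. A y l)" for y
    proof -
      have "(\<Prod>l\<in>Sj - {i}. (prop_cov Sj i \<theta> t l / \<theta> l) ^ A y l)
          = (\<Prod>l\<in>Sj - {i}. ((1 - t) / (1 - \<theta> i)) ^ A y l)"
      proof (intro prod.cong refl)
        fix l assume l: "l \<in> Sj - {i}"
        hence "\<theta> l \<noteq> 0" using thpos by (metis Diff_iff less_irrefl)
        thus "(prop_cov Sj i \<theta> t l / \<theta> l) ^ A y l = ((1 - t) / (1 - \<theta> i)) ^ A y l"
          using l by (simp add: prop_cov_def)
      qed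
      also have "\<dots> = ((1 - t) / (1 - \<theta> i)) ^ (\<Sum>l\<in>Sj - {i}. A y l)"
        by (simp add: power_sum)
      finally show ?thesis using split[of "\<lambda>l. prop_cov Sj i \<theta> t l / \<theta> l" y]
        by (simp add: prop_cov_def)
    qed
    show "cd_dist Y (mono_prob A k (prop_cov Sj i \<theta> t)) (mono_prob A k \<theta>) =
        ln (Max ((\<lambda>y. (t / \<theta> i) ^ A y i * ((1 - t) / (1 - \<theta> i)) ^ (\<Sum>l\<in>Sj - {i}. A y l)) ` Y_neq Y A Sj))
      - ln (Min ((\<lambda>y. (t / \<theta> i) ^ A y i * ((1 - t) / (1 - \<theta> i)) ^ (\<Sum>l\<in>Sj - {i}. A y l)) ` Y_neq Y A Sj))"
      using M[OF c] by (simp only: eq)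
  next
    assume c: "cov_image k Sj i \<theta> t (uni_cov Sj i \<theta> t)"
    have eq: "(\<Prod>l\<in>Sj. (uni_cov Sj i \<theta> t l / \<theta> l) ^ A y l)
       = t ^ A y i * ((1 - t) / (real (card Sj) - 1)) ^ (\<Sum>l\<in>Sj - {i}. A y l)
                       / (\<Prod>l\<in>Sj. \<theta> l ^ A y l)" for y
    proof -
      have a: "(\<Prod>l\<in>Sj. (uni_cov Sj i \<theta> t l / \<theta> l) ^ A y l)
          = (\<Prod>l\<in>Sj. uni_cov Sj i \<theta> t l ^ A y l) / (\<Prod>l\<in>Sj. \<theta> l ^ A y l)"
        by (simp add: prod_dividef power_divide)
      have b0: "(\<Prod>l\<in>Sj - {i}. uni_cov Sj i \<theta> t l ^ A y l)
          = (\<Prod>l\<in>Sj - {i}. ((1 - t) / (real (card Sj) - 1)) ^ A y l)"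
        by (intro prod.cong refl) (simp add: uni_cov_def)
      have b: "(\<Prod>l\<in>Sj. uni_cov Sj i \<theta> t l ^ A y l)
         = t ^ A y i * (\<Prod>l\<in>Sj - {i}. ((1 - t) / (real (card Sj) - 1)) ^ A y l)"
        using split[of "uni_cov Sj i \<theta> t" y] b0 by (simp add: uni_cov_def)
      have c: "(\<Prod>l\<in>Sj - {i}. ((1 - t) / (real (card Sj) - 1)) ^ A y l)
          = ((1 - t) / (real (card Sj) - 1)) ^ (\<Sum>l\<in>Sj - {i}. A y l)"
        by (simp add: power_sum)
      show ?thesis using a b c by simp
    qed
    show "cd_dist Y (mono_prob A k (uni_cov Sj i \<theta> t)) (mono_prob A k \<theta>) =
        ln (Max ((\<lambda>y. t ^ A y i * ((1 - t) / (real (card Sj) - 1)) ^ (\<Sum>l\<in>Sj - {i}. A y l)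
                       / (\<Prod>l\<in>Sj. \<theta> l ^ A y l)) ` Y_neq Y A Sj))
      - ln (Min ((\<lambda>y. t ^ A y i * ((1 - t) / (real (card Sj) - 1)) ^ (\<Sum>l\<in>Sj - {i}. A y l)
                       / (\<Prod>l\<in>Sj. \<theta> l ^ A y l)) ` Y_neq Y A Sj))"
      using M[OF c] by (simp only: eq)
  next
    fix \<gamma> \<delta> assume c: "cov_image k Sj i \<theta> t (lin_cov Sj i \<theta> \<gamma> \<delta> t)"
    have eq: "(\<Prod>l\<in>Sj. (lin_cov Sj i \<theta> \<gamma> \<delta> t l / \<theta> l) ^ A y l)
       = (t / \<theta> i) ^ A y i * (\<Prod>m\<in>Sj - {i}. ((\<gamma> m * t + \<delta> m) / \<theta> m) ^ A y m)" for y
    proof -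
      have b0: "(\<Prod>m\<in>Sj - {i}. (lin_cov Sj i \<theta> \<gamma> \<delta> t m / \<theta> m) ^ A y m)
          = (\<Prod>m\<in>Sj - {i}. ((\<gamma> m * t + \<delta> m) / \<theta> m) ^ A y m)"
        by (intro prod.cong refl) (simp add: lin_cov_def)
      show ?thesis using split[of "\<lambda>l. lin_cov Sj i \<theta> \<gamma> \<delta> t l / \<theta> l" y] b0
        by (simp add: lin_cov_def)
    qed
    show "cd_dist Y (mono_prob A k (lin_cov Sj i \<theta> \<gamma> \<delta> t)) (mono_prob A k \<theta>) =
        ln (Max ((\<lambda>y. (t / \<theta> i) ^ A y i * (\<Prod>m\<in>Sj - {i}. ((\<gamma> m * t + \<delta> m) / \<theta> m) ^ A y m)) ` Y_neq Y A Sj))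
      - ln (Min ((\<lambda>y. (t / \<theta> i) ^ A y i * (\<Prod>m\<in>Sj - {i}. ((\<gamma> m * t + \<delta> m) / \<theta> m) ^ A y m)) ` Y_neq Y A Sj))"
      using M[OF c] by (simp only: eq)
  qed
qed

end
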